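(* Let $S_1,\ldots,S_m$ be formulas ($m\ge1$). The doxastic state $\emptyset[S_1,S_2,\ldots,S_m]$ coincides with $\emptyset[S_2,\ldots,S_m]$ if and only if, for every Q-combination $Q$ of $S_2,\ldots,S_m$, either $Q\models S_1$ or $Q\models\neg S_1$.
   Context: Propositional models are truth assignments over a finite set of variables; a formula used where a set of models is expected stands for its set of models. A doxastic state is a sequence $[C(0),\ldots,C(k)]$ of nonempty, pairwise disjoint sets of models covering all models; two doxastic states coincide when they are equal (equivalently, induce the same preorder $I\le J$ iff the class index of $I$ is at most that of $J$). The flat doxastic state $\emptyset$ is $[\text{all models}]$. Lexicographic revision: $C\,\mathrm{lex}(A) = [C(0)\cap A,\ldots,C(k)\cap A, C(0)\setminus A,\ldots,C(k)\setminus A]$, empty sets discarded. $\emptyset[S_1,\ldots,S_m]$ denotes $\emptyset$ revised lexicographically by $S_1$, then $S_2$, ..., then $S_m$. A Q-combination of formulas $T_1,\ldots,T_n$ is a formula $(B_1\equiv T_1)\wedge\cdots\wedge(B_n\equiv T_n)$ with each $B_i\in\{\mathsf{true},\mathsf{false}\}$ (for $n=0$ it is $\mathsf{true}$). *)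

theory Defs
  imports Main
begin

datatype 'v form = FTrue | FFalse | Var 'v | Neg "'v form"
  | Conj "'v form" "'v form" | Disj "'v form" "'v form" | Iff "'v form" "'v form"

type_synonym 'v model = "'v \<Rightarrow> bool"

fun holds :: "'v model \<Rightarrow> 'v form \<Rightarrow> bool" where
  "holds I FTrue = True"
| "holds I FFalse = False"
| "holds I (Var v) = I v"
| "holds I (Neg f) = (\<not> holds I f)"
| "holds I (Conj f g) = (holds I f \<and> holds I g)"
| "holds I (Disj f g) = (holds I f \<or> holds I g)"
| "holds I (Iff f g) = (holds I f = holds I g)"

definition mods :: "'v form \<Rightarrow> 'v model set" where
  "mods f = {I. holds I f}"

definition entails :: "'v form \<Rightarrow> 'v form \<Rightarrow> bool" (infix "\<Turnstile>" 50) where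
  "f \<Turnstile> g \<longleftrightarrow> mods f \<subseteq> mods g"

type_synonym 'v doxstate = "'v model set list"

definition lex :: "'v doxstate \<Rightarrow> 'v form \<Rightarrow> 'v doxstate" where
  "lex C A = filter (\<lambda>X. X \<noteq> {})
      (map (\<lambda>X. X \<inter> mods A) C @ map (\<lambda>X. X - mods A) C)"

definition flat :: "'v doxstate" where
  "flat = [UNIV]"

definition revise_seq :: "'v form list \<Rightarrow> 'v doxstate" where
  "revise_seq Ss = foldl lex flat Ss"

fun bconst :: "bool \<Rightarrow> 'v form" where
  "bconst True = FTrue" | "bconst False = FFalse"

fun qcomb :: "bool list \<Rightarrow> 'v form list \<Rightarrow> 'v form" where
  "qcomb [] [] = FTrue"
| "qcomb [B] [T] = Iff (bconst B) T"
| "qcomb (B # Bs) (T # Ts) = Conj (Iff (bconst B) T) (qcomb Bs Ts)"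
| "qcomb _ _ = FTrue"

definition is_qcomb :: "'v form \<Rightarrow> 'v form list \<Rightarrow> bool" where
  "is_qcomb Q Ts \<longleftrightarrow> (\<exists>Bs. length Bs = length Ts \<and> Q = qcomb Bs Ts)"

end

theory Submission
  imports Defs
begin

definition lexu :: "'v doxstate \<Rightarrow> 'v form \<Rightarrow> 'v doxstate" where
  "lexu C A = map (\<lambda>X. X \<inter> mods A) C @ map (\<lambda>X. X - mods A) C"

lemma filt_map: "(\<And>X. f X \<subseteq> X) \<Longrightarrow>
  filter (\<lambda>X. X \<noteq> {}) (map f (filter (\<lambda>X. X \<noteq> {}) C)) = filter (\<lambda>X. X \<noteq> {}) (map f C)"
  by (induction C) auto

lemma filt_lexu: "filter (\<lambda>X. X \<noteq> {}) (lexu C A) = lex (filter (\<lambda>X. X \<noteq> {}) C) A"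
proof -
  have a: "filter (\<lambda>X. X \<noteq> {}) (map (\<lambda>X. X \<inter> mods A) (filter (\<lambda>X. X \<noteq> {}) C)) = filter (\<lambda>X. X \<noteq> {}) (map (\<lambda>X. X \<inter> mods A) C)"
    by (rule filt_map) auto
  have b: "filter (\<lambda>X. X \<noteq> {}) (map (\<lambda>X. X - mods A) (filter (\<lambda>X. X \<noteq> {}) C)) = filter (\<lambda>X. X \<noteq> {}) (map (\<lambda>X. X - mods A) C)"
    by (rule filt_map) auto
  show ?thesis unfolding Defs.lex_def lexu_def filter_append a b ..
qed

lemma foldl_filt: "foldl lex (filter (\<lambda>X. X \<noteq> {}) C) Ss = filter (\<lambda>X. X \<noteq> {}) (foldl lexu C Ss)"
  by (induction Ss arbitrary: C) (simp_all add: filt_lexu[symmetric])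

lemma foldl_concat: "foldl lexu C Ss = concat (map (\<lambda>Y. map (\<lambda>X. X \<inter> Y) C) (foldl lexu [UNIV] Ss))"
proof (induction Ss rule: rev_induct)
  case Nil then show ?case by simp
next
  case (snoc A Ss)
  show ?case using snoc by (simp add: lexu_def map_concat comp_def Int_assoc Int_Diff)
qed

lemma rev_eq: "revise_seq Ss = filter (\<lambda>X. X \<noteq> {}) (foldl lexu [UNIV] Ss)"
  unfolding revise_seq_def flat_def using foldl_filt[of "[UNIV]" Ss] by simp

lemma P_cons: "foldl lexu [UNIV] (A # Ss) = concat (map (\<lambda>Y. [mods A \<inter> Y, Y - mods A]) (foldl lexu [UNIV] Ss))"
  using foldl_concat[of "[mods A, - mods A]" Ss]
  by (simp add: lexu_def Int_commute Diff_eq)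

declare foldl_Cons[simp del]

lemma mods_qcomb_cons: "length bs = length Ss \<Longrightarrow>
  mods (qcomb (b # bs) (A # Ss)) = mods (Iff (bconst b) A) \<inter> mods (qcomb bs Ss)"
  by (cases Ss; cases bs) (auto simp: mods_def)

lemma mods_iff: "mods (Iff (bconst b) A) = (if b then mods A else - mods A)"
  by (cases b) (auto simp: mods_def)

lemma mods_iffT: "mods (Iff FTrue A) = mods A" and mods_iffF: "mods (Iff FFalse A) = - mods A"
  by (auto simp: mods_def)

lemma set_P: "set (foldl lexu [UNIV] Ss) = {mods Q | Q. is_qcomb Q Ss}"
proof (induction Ss)
  case Nil then show ?case by (auto simp: is_qcomb_def mods_def)
next
  case (Cons A Ss)
  show ?case
  proof
    show "set (foldl lexu [UNIV] (A # Ss)) \<subseteq> {mods Q | Q. is_qcomb Q (A # Ss)}"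
    proof
      fix Z assume "Z \<in> set (foldl lexu [UNIV] (A # Ss))"
      then obtain Y where Y: "Y \<in> set (foldl lexu [UNIV] Ss)" and Z: "Z = mods A \<inter> Y \<or> Z = Y - mods A"
        by (auto simp: P_cons)
      from Y Cons obtain bs where bs: "length bs = length Ss" "Y = mods (qcomb bs Ss)"
        by (auto simp: is_qcomb_def)
      from Z show "Z \<in> {mods Q | Q. is_qcomb Q (A # Ss)}"
      proof
        assume "Z = mods A \<inter> Y"
        then have "Z = mods (qcomb (True # bs) (A # Ss))" using bs by (simp add: mods_qcomb_cons mods_iff mods_iffT mods_iffF)
        then show ?thesis using bs unfolding is_qcomb_def
          by (intro CollectI exI[of _ "qcomb (True # bs) (A # Ss)"]) (auto intro: exI[of _ "True # bs"])
      next
        assume "Z = Y - mods A"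
        then have "Z = mods (qcomb (False # bs) (A # Ss))" using bs by (auto simp add: mods_qcomb_cons mods_iff mods_iffT mods_iffF)
        then show ?thesis using bs unfolding is_qcomb_def
          by (intro CollectI exI[of _ "qcomb (False # bs) (A # Ss)"]) (auto intro: exI[of _ "False # bs"])
      qed
    qed
  next
    show "{mods Q | Q. is_qcomb Q (A # Ss)} \<subseteq> set (foldl lexu [UNIV] (A # Ss))"
    proof
      fix Z assume "Z \<in> {mods Q | Q. is_qcomb Q (A # Ss)}"
      then obtain b bs where bs: "length bs = length Ss" "Z = mods (qcomb (b # bs) (A # Ss))"
        unfolding is_qcomb_def by (auto simp: length_Suc_conv)
      have Y: "mods (qcomb bs Ss) \<in> set (foldl lexu [UNIV] Ss)" using Cons bs(1) by (auto simp: is_qcomb_def)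
      show "Z \<in> set (foldl lexu [UNIV] (A # Ss))"
        using Y bs by (cases b) (auto simp: P_cons mods_qcomb_cons mods_iff mods_iffT mods_iffF Diff_eq Int_commute)
    qed
  qed
qed

lemma split_list:
  "length (filter (\<lambda>X. X \<noteq> {}) L) \<le> length (filter (\<lambda>X. X \<noteq> {}) (concat (map (\<lambda>Y. [S \<inter> Y, Y - S]) L)))
   \<and> ((\<exists>Y\<in>set L. \<not> (Y \<subseteq> S \<or> Y \<inter> S = {})) \<longrightarrow>
      length (filter (\<lambda>X. X \<noteq> {}) L) < length (filter (\<lambda>X. X \<noteq> {}) (concat (map (\<lambda>Y. [S \<inter> Y, Y - S]) L))))"
  by (induction L) auto

lemma split_eq: "(\<forall>Y\<in>set L. Y \<subseteq> S \<or> Y \<inter> S = {}) \<Longrightarrow>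
  filter (\<lambda>X. X \<noteq> {}) (concat (map (\<lambda>Y. [S \<inter> Y, Y - S]) L)) = filter (\<lambda>X. X \<noteq> {}) L"
proof (induction L)
  case Nil then show ?case by simp
next
  case (Cons Y L)
  then have "Y \<subseteq> S \<or> Y \<inter> S = {}" by simp
  then show ?case using Cons by (auto simp: Int_absorb1 Int_commute)
qed

theorem mainTheorem6:
  fixes S1 :: "'v::finite form" and Ss :: "'v form list"
  shows "revise_seq (S1 # Ss) = revise_seq Ss \<longleftrightarrow>
         (\<forall>Q. is_qcomb Q Ss \<longrightarrow> (Q \<Turnstile> S1 \<or> Q \<Turnstile> Neg S1))"
proof -
  let ?L = "foldl lexu [UNIV] Ss"
  have e: "(\<forall>Q. is_qcomb Q Ss \<longrightarrow> (Q \<Turnstile> S1 \<or> Q \<Turnstile> Neg S1))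
     \<longleftrightarrow> (\<forall>Y\<in>set ?L. Y \<subseteq> mods S1 \<or> Y \<inter> mods S1 = {})"
    unfolding set_P entails_def by (auto simp: mods_def)
  have r: "revise_seq (S1 # Ss) = filter (\<lambda>X. X \<noteq> {}) (concat (map (\<lambda>Y. [mods S1 \<inter> Y, Y - mods S1]) ?L))"
    by (simp only: rev_eq P_cons)
  show ?thesis
    unfolding e r unfolding rev_eq
    using split_list[of ?L "mods S1"] split_eq[of ?L "mods S1"] by auto
qed

end
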